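(* Every graph of pathwidth at most $2$ and order $n$ has at most $4^{n/3}$ induced matchings. The bound is attained by the triangle $K_3$.
   Context: An induced matching of a graph $G=(V,E)$ is here a set $D\subseteq V$ such that every vertex of $D$ has exactly one neighbour in $D$ (a $(\{1\},\mathbb{N})$-dominating set); the empty set counts. Equivalently, a set of edges $M$ such that the subgraph induced by the endpoints of $M$ has edge set $M$. Order = number of vertices; pathwidth is the standard notion. *)

theory Defs
  imports Complex_Main
begin

definition simple_graph :: "'a set \<Rightarrow> ('a \<Rightarrow> 'a \<Rightarrow> bool) \<Rightarrow> bool" where
  "simple_graph V E \<longleftrightarrow> finite V \<and> (\<forall>u v. E u v \<longrightarrow> u \<in> V \<and> v \<in> V)
     \<and> (\<forall>u v. E u v \<longrightarrow> E v u) \<and> (\<forall>v. \<not> E v v)"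

definition path_decomposition :: "'a set \<Rightarrow> ('a \<Rightarrow> 'a \<Rightarrow> bool) \<Rightarrow> 'a set list \<Rightarrow> bool" where
  "path_decomposition V E B \<longleftrightarrow>
     (\<forall>i<length B. B ! i \<subseteq> V)
   \<and> (\<forall>v\<in>V. \<exists>i<length B. v \<in> B ! i)
   \<and> (\<forall>u v. E u v \<longrightarrow> (\<exists>i<length B. u \<in> B ! i \<and> v \<in> B ! i))
   \<and> (\<forall>v i j k. i \<le> j \<and> j \<le> k \<and> k < length B \<and> v \<in> B ! i \<and> v \<in> B ! k \<longrightarrow> v \<in> B ! j)"

text \<open>Width of a decomposition = max bag size minus one; pathwidth = minimum width.
  So "pathwidth at most k" means some path decomposition has all bags of size at most k+1.\<close>
definition pathwidth_le :: "'a set \<Rightarrow> ('a \<Rightarrow> 'a \<Rightarrow> bool) \<Rightarrow> nat \<Rightarrow> bool" where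
  "pathwidth_le V E k \<longleftrightarrow>
     (\<exists>B. path_decomposition V E B \<and> (\<forall>X\<in>set B. card X \<le> k + 1))"

text \<open>Induced matchings as ({1},N)-dominating sets: every vertex of D has exactly one neighbour in D.\<close>
definition induced_matchings :: "'a set \<Rightarrow> ('a \<Rightarrow> 'a \<Rightarrow> bool) \<Rightarrow> 'a set set" where
  "induced_matchings V E = {D. D \<subseteq> V \<and> (\<forall>v\<in>D. card {u\<in>D. E v u} = 1)}"

end

theory Submission
  imports Defs
begin

definition cc :: real where "cc = 4 powr (1/3)"
lemma cc3: "cc^3 = 4" unfolding cc_def by (simp add: powr_realpow[symmetric] powr_powr)
lemma ccpos: "cc > 0" unfolding cc_def by simp
lemma cc_ge: "cc \<ge> 31/20"
proof (rule ccontr)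
  assume "\<not> ?thesis" hence "cc^3 < (31/20)^3" using ccpos by (intro power_strict_mono) auto
  thus False using cc3 by (simp add: power3_eq_cube)
qed
lemma cc4: "cc^4 = 4*cc" 
proof - 
  have "cc^4 = cc * cc^3" by (simp add: eval_nat_numeral)
  thus ?thesis using cc3 by simp
qed
lemma cc2: "cc^2 \<ge> (31/20)^2" using cc_ge by (intro power_mono) auto
lemma n1: "1/cc + 1/cc^3 \<le> 1"
proof -
  have "1/cc \<le> 20/31" using cc_ge ccpos by (simp add: field_simps)
  thus ?thesis using cc3 by simp
qed
lemma y2: "1/cc^2 \<le> 400/961"
proof -
  have "cc^2 \<ge> 961/400" using cc2 by (simp add: power_divide)
  moreover have "cc^2 > 0" using ccpos by simp
  ultimately show ?thesis by (simp add: field_simps)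
qed
lemma x1: "1/cc \<le> 20/31" using cc_ge ccpos by (simp add: field_simps)
lemma x4: "1/cc^4 = (1/cc)/4" using cc4 by simp
lemma x3: "1/cc^3 = 1/4" using cc3 by simp
lemma n2: "1/cc^2 + 1/cc^2 \<le> 1" using y2 by linarith
lemma n3: "1/cc + 1/cc^4 + 1/cc^4 \<le> 1" unfolding x4 using x1 by linarith
lemma n4: "1/cc^3 + 1/cc^3 + 1/cc^3 + 1/cc^3 \<le> 1" using cc3 by simp
lemma n5: "1/cc^2 + 1/cc^4 + 1/cc^3 + 1/cc^4 \<le> 1" unfolding x4 x3 using x1 y2 by linarith

definition nb :: "'a set \<Rightarrow> ('a \<Rightarrow> 'a \<Rightarrow> bool) \<Rightarrow> 'a \<Rightarrow> 'a set" where
  "nb W E x = {u\<in>W. E x u}"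
definition RR :: "'a set \<Rightarrow> ('a \<Rightarrow> 'a \<Rightarrow> bool) \<Rightarrow> 'a \<Rightarrow> 'a \<Rightarrow> 'a set" where
  "RR W E x u = W - ({x,u} \<union> nb W E x \<union> nb W E u)"

lemma IM_finite: "finite W \<Longrightarrow> finite (induced_matchings W E)"
  unfolding induced_matchings_def by (rule finite_subset[of _ "Pow W"]) auto

lemma IM_isolated:
  assumes "nb W E x = {}" "finite W"
  shows "card (induced_matchings W E) \<le> card (induced_matchings (W - {x}) E)"
proof (rule card_mono)
  show "finite (induced_matchings (W - {x}) E)" using assms by (simp add: IM_finite)
  show "induced_matchings W E \<subseteq> induced_matchings (W - {x}) E"
  proof
    fix D assume D: "D \<in> induced_matchings W E"
    have "x \<notin> D"
    proof
      assume "x \<in> D"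
      hence "card {u\<in>D. E x u} = 1" using D unfolding induced_matchings_def by auto
      moreover have "{u\<in>D. E x u} = {}" using assms(1) D unfolding nb_def induced_matchings_def by auto
      ultimately show False by simp
    qed
    thus "D \<in> induced_matchings (W - {x}) E" using D unfolding induced_matchings_def by auto
  qed
qed

lemma IM_branch:
  assumes sym: "\<forall>u v. E u v \<longrightarrow> E v u" and irr: "\<forall>v. \<not> E v v"
    and fin: "finite W" and xW: "x \<in> W"
  shows "card (induced_matchings W E) \<le> card (induced_matchings (W - {x}) E)
          + (\<Sum>u\<in>nb W E x. card (induced_matchings (RR W E x u) E))"
proof -
  let ?A = "induced_matchings (W - {x}) E"
  let ?F = "\<lambda>u. (\<lambda>D. insert x (insert u D)) ` induced_matchings (RR W E x u) E"
  have sub: "induced_matchings W E \<subseteq> ?A \<union> (\<Union>u\<in>nb W E x. ?F u)"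
  proof
    fix D assume D: "D \<in> induced_matchings W E"
    hence DW: "D \<subseteq> W" and Dc: "\<forall>v\<in>D. card {u\<in>D. E v u} = 1"
      unfolding induced_matchings_def by auto
    show "D \<in> ?A \<union> (\<Union>u\<in>nb W E x. ?F u)"
    proof (cases "x \<in> D")
      case False
      thus ?thesis using D unfolding induced_matchings_def by auto
    next
      case True
      hence "card {u\<in>D. E x u} = 1" using Dc by auto
      then obtain u where u: "{w\<in>D. E x w} = {u}" by (auto simp: card_1_singleton_iff)
      hence uD: "u \<in> D" and xu: "E x u" by auto
      hence unb: "u \<in> nb W E x" using DW unfolding nb_def by auto
      have ux: "u \<noteq> x" using xu irr by auto
      have "card {w\<in>D. E u w} = 1" using Dc uD by auto
      then obtain z where z: "{w\<in>D. E u w} = {z}" by (auto simp: card_1_singleton_iff)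
      have "x \<in> {w\<in>D. E u w}" using True xu sym by auto
      hence uz: "{w\<in>D. E u w} = {x}" using z by auto
      define D' where "D' = D - {x,u}"
      have Deq: "D = insert x (insert u D')" unfolding D'_def using True uD by auto
      have D'R: "D' \<subseteq> RR W E x u"
      proof
        fix y assume y: "y \<in> D'"
        hence yD: "y \<in> D" and yx: "y \<noteq> x" and yu: "y \<noteq> u" unfolding D'_def by auto
        have "\<not> E x y" using u yD yu by auto
        moreover have "\<not> E u y" using uz yD yx by auto
        ultimately show "y \<in> RR W E x u" using yD DW yx yu unfolding RR_def nb_def by auto
      qed
      have "D' \<in> induced_matchings (RR W E x u) E"
      proof -
        have "\<forall>y\<in>D'. card {w\<in>D'. E y w} = 1"
        proof
          fix y assume y: "y \<in> D'"
          hence yD: "y \<in> D" and yx: "y \<noteq> x" and yu: "y \<noteq> u" unfolding D'_def by auto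
          have "\<not> E x y" using u yD yu by auto
          moreover have "\<not> E u y" using uz yD yx by auto
          ultimately have "\<not> E y x" "\<not> E y u" using sym by auto
          hence "{w\<in>D'. E y w} = {w\<in>D. E y w}" unfolding D'_def by auto
          thus "card {w\<in>D'. E y w} = 1" using Dc yD by simp
        qed
        thus ?thesis using D'R unfolding induced_matchings_def by auto
      qed
      hence "D \<in> ?F u" using Deq by auto
      thus ?thesis using unb by auto
    qed
  qed
  have finnb: "finite (nb W E x)" using fin unfolding nb_def by auto
  have finR: "\<And>u. finite (induced_matchings (RR W E x u) E)"
    using fin by (intro IM_finite) (auto simp: RR_def)
  have "card (induced_matchings W E) \<le> card (?A \<union> (\<Union>u\<in>nb W E x. ?F u))"
    using sub fin finnb finR by (intro card_mono) (auto simp: IM_finite)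
  also have "\<dots> \<le> card ?A + card (\<Union>u\<in>nb W E x. ?F u)" by (rule card_Un_le)
  also have "card (\<Union>u\<in>nb W E x. ?F u) \<le> (\<Sum>u\<in>nb W E x. card (?F u))"
    using finnb by (rule card_UN_le)
  also have "\<dots> \<le> (\<Sum>u\<in>nb W E x. card (induced_matchings (RR W E x u) E))"
    by (intro sum_mono card_image_le finR)
  finally show ?thesis by simp
qed


lemma cc_ge1: "cc \<ge> 1" using cc_ge by simp

lemma piece:
  assumes IH: "\<forall>P. P \<subseteq> W \<and> card P < card W \<longrightarrow> real (card (induced_matchings P E)) \<le> cc ^ card P"
    and fin: "finite W" and PK: "P \<subseteq> W - K" and KW: "K \<subseteq> W" and ck: "card K = k" and k1: "k \<ge> 1"
  shows "real (card (induced_matchings P E)) \<le> cc ^ card W * (1 / cc ^ k)"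
proof -
  have finK: "finite K" using fin KW finite_subset by blast
  have kW: "k \<le> card W" using card_mono[OF fin KW] ck by simp
  have "card P \<le> card (W - K)" using PK fin by (intro card_mono) auto
  also have "card (W - K) = card W - k" using card_Diff_subset[OF finK KW] ck by simp
  finally have cP: "card P \<le> card W - k" .
  hence "card P < card W" using k1 kW by linarith
  hence "real (card (induced_matchings P E)) \<le> cc ^ card P" using IH PK by auto
  also have "\<dots> \<le> cc ^ (card W - k)" using cP cc_ge1 by (intro power_increasing) auto
  also have "\<dots> = cc ^ card W / cc ^ k" using ccpos kW by (simp add: power_diff)
  finally show ?thesis by simp
qed

lemma comb2: "(X::real) \<le> N * p \<Longrightarrow> Y \<le> N * q \<Longrightarrow> p + q \<le> 1 \<Longrightarrow> N \<ge> 0 \<Longrightarrow> X + Y \<le> N"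
proof -
  assume a: "X \<le> N * p" "Y \<le> N * q" "p + q \<le> 1" "N \<ge> 0"
  have "N * (p + q) \<le> N * 1" using a by (intro mult_left_mono) auto
  thus ?thesis using a by (simp add: distrib_left)
qed
lemma comb3: "(X::real) \<le> N * p \<Longrightarrow> Y \<le> N * q \<Longrightarrow> Z \<le> N * r \<Longrightarrow> p + q + r \<le> 1 \<Longrightarrow> N \<ge> 0 \<Longrightarrow> X + Y + Z \<le> N"
proof -
  assume a: "X \<le> N * p" "Y \<le> N * q" "Z \<le> N * r" "p + q + r \<le> 1" "N \<ge> 0"
  have "N * (p + q + r) \<le> N * 1" using a by (intro mult_left_mono) auto
  thus ?thesis using a by (simp add: distrib_left)
qed
lemma comb4: "(X::real) \<le> N * p \<Longrightarrow> Y \<le> N * q \<Longrightarrow> Z \<le> N * r \<Longrightarrow> U \<le> N * s \<Longrightarrow> p + q + r + s \<le> 1 \<Longrightarrow> N \<ge> 0 \<Longrightarrow> X + Y + Z + U \<le> N"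
proof -
  assume a: "X \<le> N * p" "Y \<le> N * q" "Z \<le> N * r" "U \<le> N * s" "p + q + r + s \<le> 1" "N \<ge> 0"
  have "N * (p + q + r + s) \<le> N * 1" using a by (intro mult_left_mono) auto
  thus ?thesis using a by (simp add: distrib_left)
qed

lemma nb_minus: "nb (W - {y}) E x = nb W E x - {y}" unfolding nb_def by auto


lemma real_sum2: "(k::nat) \<le> a + b \<Longrightarrow> real k \<le> real a + real b"
  by (metis of_nat_add of_nat_mono)
lemma real_sum3: "(k::nat) \<le> a + b + c \<Longrightarrow> real k \<le> real a + real b + real c"
  by (metis of_nat_add of_nat_mono)
lemma real_sum4: "(k::nat) \<le> a + b + c + d \<Longrightarrow> real k \<le> real a + real b + real c + real d"
  by (metis of_nat_add of_nat_mono)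

lemma IM_empty: "induced_matchings {} E = {{}}" unfolding induced_matchings_def by auto

lemma main_bound:
  assumes sym: "\<forall>u v. E u v \<longrightarrow> E v u" and irr: "\<forall>v. \<not> E v v"
    and fin: "finite V"
    and degen: "\<forall>W'. W' \<subseteq> V \<and> W' \<noteq> {} \<longrightarrow> (\<exists>v\<in>W'. card (nb W' E v) \<le> 2)"
  shows "W \<subseteq> V \<Longrightarrow> real (card (induced_matchings W E)) \<le> cc ^ card W"
proof (induction "card W" arbitrary: W rule: less_induct)
  case less
  have finW: "finite W" using less.prems fin finite_subset by blast
  have IH: "\<forall>P. P \<subseteq> W \<and> card P < card W \<longrightarrow> real (card (induced_matchings P E)) \<le> cc ^ card P"
    using less.hyps less.prems by auto
  define N where "N = cc ^ card W"
  have N0: "N \<ge> 0" using ccpos unfolding N_def by simp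
  note pc = piece[OF IH finW, folded N_def]
  have pc1: "real (card (induced_matchings P E)) \<le> N * (1 / cc)"
    if "P \<subseteq> W - {x}" "x \<in> W" for P x
    using pc[where K="{x}" and k=1 and P=P] that by simp
  have pc2: "real (card (induced_matchings P E)) \<le> N * (1 / cc ^ 2)"
    if "P \<subseteq> W - {x,y}" "x \<in> W" "y \<in> W" "x \<noteq> y" for P x y
    by (rule pc[where K="{x,y}" and k=2 and P=P]) (use that in simp_all)
  have pc3: "real (card (induced_matchings P E)) \<le> N * (1 / cc ^ 3)"
    if "P \<subseteq> W - {x,y,z}" "x \<in> W" "y \<in> W" "z \<in> W" "x \<noteq> y" "x \<noteq> z" "y \<noteq> z" for P x y z
    by (rule pc[where K="{x,y,z}" and k=3 and P=P]) (use that in simp_all)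
  have pc4: "real (card (induced_matchings P E)) \<le> N * (1 / cc ^ 4)"
    if "P \<subseteq> W - {x,y,z,t}" "x \<in> W" "y \<in> W" "z \<in> W" "t \<in> W" "x \<noteq> y" "x \<noteq> z" "y \<noteq> z"
       "t \<noteq> x" "t \<noteq> y" "t \<noteq> z" for P x y z t
    by (rule pc[where K="{x,y,z,t}" and k=4 and P=P]) (use that in simp_all)
  have nbD: "\<And>u x. u \<in> nb W E x \<Longrightarrow> u \<in> W \<and> E x u" unfolding nb_def by auto
  have nbI: "\<And>u x. u \<in> W \<Longrightarrow> E x u \<Longrightarrow> u \<in> nb W E x" unfolding nb_def by auto
  have Esym: "\<And>x y. E x y \<Longrightarrow> E y x" using sym by auto
  have Eirr: "\<And>x y. E x y \<Longrightarrow> x \<noteq> y" using irr by auto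
  show ?case
  proof (cases "W = {}")
    case True
    thus ?thesis by (simp add: IM_empty)
  next
    case nonempty: False
    show ?thesis
    proof (cases "\<exists>x\<in>W. nb W E x = {}")
      case True
      then obtain x where x: "x \<in> W" "nb W E x = {}" by auto
      have "real (card (induced_matchings W E)) \<le> real (card (induced_matchings (W - {x}) E))"
        using IM_isolated[OF x(2) finW] by simp
      also have "\<dots> \<le> N * (1 / cc ^ 1)" by (rule pc[where K="{x}"]) (use x in auto)
      also have "\<dots> \<le> N * 1" using cc_ge1 N0 by (intro mult_left_mono) auto
      finally show ?thesis unfolding N_def by simp
    next
      case F0: False
      show ?thesis
      proof (cases "\<exists>x\<in>W. \<exists>u. nb W E x = {u}")
        case True
        then obtain x u where x: "x \<in> W" and xu: "nb W E x = {u}" by auto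
        have uW: "u \<in> W" and Exu: "E x u" using nbD[of u x] xu by auto
        have ux: "u \<noteq> x" using Exu irr by auto
        have br: "card (induced_matchings W E) \<le> card (induced_matchings (W - {x}) E)
             + card (induced_matchings (RR W E x u) E)"
          using IM_branch[OF sym irr finW x] xu by simp
        show ?thesis
        proof (cases "nb W E u = {x}")
          case True
          have iso: "nb (W - {x}) E u = {}" using True by (simp add: nb_minus)
          have i1: "card (induced_matchings (W - {x}) E) \<le> card (induced_matchings (W - {x} - {u}) E)"
            by (rule IM_isolated[OF iso]) (use finW in simp)
          have p1: "real (card (induced_matchings (W - {x} - {u}) E)) \<le> N * (1 / cc ^ 2)"
            by (rule pc[where K="{x,u}"]) (use x uW ux in auto)
          have p2: "real (card (induced_matchings (RR W E x u) E)) \<le> N * (1 / cc ^ 2)"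
            by (rule pc[where K="{x,u}"]) (use x uW ux in \<open>auto simp: RR_def\<close>)
          have "real (card (induced_matchings W E)) \<le> real (card (induced_matchings (W - {x} - {u}) E))
             + real (card (induced_matchings (RR W E x u) E))"
            using br i1 by (intro real_sum2) linarith
          also have "\<dots> \<le> N" using p1 p2 n2 N0 by (rule comb2)
          finally show ?thesis unfolding N_def .
        next
          case False
          have "x \<in> nb W E u" using x Exu sym nbI by auto
          then obtain w where w: "w \<in> nb W E u" "w \<noteq> x" using False by blast
          have wW: "w \<in> W" and Euw: "E u w" using nbD w by auto
          have wu: "w \<noteq> u" using Euw irr by auto
          have p1: "real (card (induced_matchings (W - {x}) E)) \<le> N * (1 / cc)"
            using pc[where K="{x}" and k=1] x by auto
          have p2: "real (card (induced_matchings (RR W E x u) E)) \<le> N * (1 / cc ^ 3)"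
            by (rule pc[where K="{x,u,w}"]) (use x uW ux wW w wu in \<open>auto simp: RR_def\<close>)
          have "real (card (induced_matchings W E)) \<le> real (card (induced_matchings (W - {x}) E))
             + real (card (induced_matchings (RR W E x u) E))"
            using br by (intro real_sum2) linarith
          also have "\<dots> \<le> N" using p1 p2 n1 N0 by (rule comb2)
          finally show ?thesis unfolding N_def .
        qed
      next
        case F1: False
        obtain v where v: "v \<in> W" and cv: "card (nb W E v) \<le> 2"
          using degen[rule_format, of W] less.prems nonempty by auto
        have finnb: "finite (nb W E v)" using finW unfolding nb_def by auto
        have "nb W E v \<noteq> {}" using F0 v by auto
        hence "card (nb W E v) \<noteq> 0" using finnb by simp
        moreover have "card (nb W E v) \<noteq> 1" using F1 v by (auto simp: card_1_singleton_iff)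
        ultimately have "card (nb W E v) = 2" using cv by linarith
        then obtain a b where ab: "nb W E v = {a,b}" "a \<noteq> b" by (auto simp: card_2_iff)
        have tri: "real (card (induced_matchings W E)) \<le> N"
          if ab: "nb W E v = {a,b}" "a \<noteq> b" and Eab: "E a b" and nba: "nb W E a = {v,b}" for a b
        proof -
          have aW: "a \<in> W" and bW: "b \<in> W" and Eva: "E v a" and Evb: "E v b"
            using nbD[of a v] nbD[of b v] ab(1) by auto
          have va: "v \<noteq> a" and vb: "v \<noteq> b" using Eva Evb irr by auto
          define W' where "W' = W - {v}"
          have finW': "finite W'" using finW W'_def by auto
          have nba': "nb W' E a = {b}" unfolding W'_def using nba vb by (auto simp: nb_minus)
          have aW': "a \<in> W'" using aW va W'_def by auto
          have br1: "card (induced_matchings W E) \<le> card (induced_matchings W' E)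
             + (card (induced_matchings (RR W E v a) E) + card (induced_matchings (RR W E v b) E))"
            using IM_branch[OF sym irr finW v] ab unfolding W'_def by simp
          have br2: "card (induced_matchings W' E) \<le> card (induced_matchings (W' - {a}) E)
             + card (induced_matchings (RR W' E a b) E)"
            using IM_branch[OF sym irr finW' aW'] nba' by simp
          have pa: "real (card (induced_matchings (RR W E v a) E)) \<le> N * (1 / cc ^ 3)"
            proof (rule pc3[OF _ v aW bW va vb ab(2)])
            show "RR W E v a \<subseteq> W - {v,a,b}" unfolding RR_def using ab(1) by auto
          qed
          show ?thesis
          proof (cases "nb W E b = {v,a}")
            case True
            have iso: "nb (W' - {a}) E b = {}" using True unfolding W'_def by (auto simp: nb_minus)
            have i1: "card (induced_matchings (W' - {a}) E) \<le> card (induced_matchings (W' - {a} - {b}) E)"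
              by (rule IM_isolated[OF iso]) (use finW' in simp)
            have p1: "real (card (induced_matchings (W' - {a} - {b}) E)) \<le> N * (1 / cc ^ 3)"
              by (rule pc3[OF _ v aW bW va vb ab(2)]) (auto simp: W'_def)
            have p2: "real (card (induced_matchings (RR W' E a b) E)) \<le> N * (1 / cc ^ 3)"
              by (rule pc3[OF _ v aW bW va vb ab(2)]) (auto simp: W'_def RR_def)
            have pb: "real (card (induced_matchings (RR W E v b) E)) \<le> N * (1 / cc ^ 3)"
              proof (rule pc3[OF _ v aW bW va vb ab(2)])
              show "RR W E v b \<subseteq> W - {v,a,b}" unfolding RR_def using ab(1) by auto
            qed
            have "real (card (induced_matchings W E)) \<le> real (card (induced_matchings (W' - {a} - {b}) E))
               + real (card (induced_matchings (RR W' E a b) E)) + real (card (induced_matchings (RR W E v a) E))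
               + real (card (induced_matchings (RR W E v b) E))"
              using br1 br2 i1 by (intro real_sum4) linarith
            also have "\<dots> \<le> N" using p1 p2 pa pb n4 N0 by (rule comb4)
            finally show ?thesis .
          next
            case False
            have "v \<in> nb W E b" "a \<in> nb W E b" using v aW Evb Eab Esym nbI by auto
            then obtain w where w: "w \<in> nb W E b" "w \<noteq> v" "w \<noteq> a" using False by blast
            have wW: "w \<in> W" and Ebw: "E b w" using nbD w by auto
            have wb: "w \<noteq> b" using Ebw irr by auto
            have p1: "real (card (induced_matchings (W' - {a}) E)) \<le> N * (1 / cc ^ 2)"
              by (rule pc2[OF _ v aW va]) (auto simp: W'_def)
            have p2: "real (card (induced_matchings (RR W' E a b) E)) \<le> N * (1 / cc ^ 4)"
              proof (rule pc4[OF _ v aW bW wW va vb ab(2)])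
              have "w \<in> nb W' E b" using w wW Ebw unfolding W'_def nb_def by auto
              thus "RR W' E a b \<subseteq> W - {v,a,b,w}" unfolding RR_def W'_def by auto
            qed (use w wb in auto)
            have pb: "real (card (induced_matchings (RR W E v b) E)) \<le> N * (1 / cc ^ 4)"
              proof (rule pc4[OF _ v aW bW wW va vb ab(2)])
              show "RR W E v b \<subseteq> W - {v,a,b,w}" unfolding RR_def using ab(1) w(1) by auto
            qed (use w wb in auto)
            have "real (card (induced_matchings W E)) \<le> real (card (induced_matchings (W' - {a}) E))
               + real (card (induced_matchings (RR W' E a b) E)) + real (card (induced_matchings (RR W E v a) E))
               + real (card (induced_matchings (RR W E v b) E))"
              using br1 br2 by (intro real_sum4) linarith
            also have "\<dots> \<le> N" using p1 p2 pa pb n5 N0 by (rule comb4)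
            finally show ?thesis .
          qed
        qed
        have gen: "\<exists>w\<in>nb W E a. w \<notin> {v,a,b}"
          if ab: "nb W E v = {a,b}" "a \<noteq> b" and nt: "\<not> (E a b \<and> nb W E a = {v,b})" for a b
        proof -
          have aW: "a \<in> W" and bW: "b \<in> W" and Eva: "E v a" and Evb: "E v b"
            using nbD[of a v] nbD[of b v] ab(1) by auto
          have vna: "v \<in> nb W E a" using v Eva Esym nbI by auto
          show ?thesis
          proof (cases "E a b")
            case True
            hence "b \<in> nb W E a" using bW nbI by auto
            hence "nb W E a \<noteq> {v,b}" "{v,b} \<subseteq> nb W E a" using nt True vna by auto
            then obtain w where "w \<in> nb W E a" "w \<notin> {v,b}" by blast
            moreover have "w \<noteq> a" using calculation(1) nbD irr by blast
            ultimately show ?thesis by auto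
          next
            case False
            have "nb W E a \<noteq> {v}" using F1 aW by auto
            then obtain w where w: "w \<in> nb W E a" "w \<noteq> v" using vna by blast
            have "E a w" using w nbD by blast
            hence "w \<noteq> a" "w \<noteq> b" using irr False by auto
            thus ?thesis using w by auto
          qed
        qed
        show ?thesis
        proof (cases "E a b \<and> nb W E a = {v,b}")
          case True
          hence "real (card (induced_matchings W E)) \<le> N" using tri[OF ab] by auto
          thus ?thesis unfolding N_def .
        next
          case Fa: False
          show ?thesis
          proof (cases "E b a \<and> nb W E b = {v,a}")
            case True
            have "nb W E v = {b,a}" using ab by auto
            hence "real (card (induced_matchings W E)) \<le> N" using tri[of b a] ab True by auto
            thus ?thesis unfolding N_def .
          next
            case Fb: False
            have ab': "nb W E v = {b,a}" "b \<noteq> a" using ab by auto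
            obtain wa where wa: "wa \<in> nb W E a" "wa \<notin> {v,a,b}" using gen[OF ab Fa] by blast
            obtain wb where wb: "wb \<in> nb W E b" "wb \<notin> {v,a,b}" using gen[OF ab' Fb] by blast
            have aW: "a \<in> W" and bW: "b \<in> W" and Eva: "E v a" and Evb: "E v b"
              using nbD[of a v] nbD[of b v] ab(1) by auto
            have va: "v \<noteq> a" and vb: "v \<noteq> b" using Eva Evb irr by auto
            have waW: "wa \<in> W" "wb \<in> W" using wa wb nbD by blast+
            have br: "card (induced_matchings W E) \<le> card (induced_matchings (W - {v}) E)
               + (card (induced_matchings (RR W E v a) E) + card (induced_matchings (RR W E v b) E))"
              using IM_branch[OF sym irr finW v] ab by simp
            have p1: "real (card (induced_matchings (W - {v}) E)) \<le> N * (1 / cc)"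
              by (rule pc1[OF _ v]) auto
            have pa: "real (card (induced_matchings (RR W E v a) E)) \<le> N * (1 / cc ^ 4)"
              proof (rule pc4[OF _ v aW bW waW(1) va vb ab(2)])
              show "RR W E v a \<subseteq> W - {v,a,b,wa}" unfolding RR_def using ab(1) wa(1) by auto
            qed (use wa in auto)
            have pb: "real (card (induced_matchings (RR W E v b) E)) \<le> N * (1 / cc ^ 4)"
              proof (rule pc4[OF _ v aW bW waW(2) va vb ab(2)])
              show "RR W E v b \<subseteq> W - {v,a,b,wb}" unfolding RR_def using ab(1) wb(1) by auto
            qed (use wb in auto)
            have "real (card (induced_matchings W E)) \<le> real (card (induced_matchings (W - {v}) E))
               + real (card (induced_matchings (RR W E v a) E)) + real (card (induced_matchings (RR W E v b) E))"
              using br by (intro real_sum3) linarith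
            also have "\<dots> \<le> N" using p1 pa pb n3 N0 by (rule comb3)
            finally show ?thesis unfolding N_def .
          qed
        qed
      qed
    qed
  qed
qed


lemma pw_degen:
  assumes pd: "path_decomposition V E B" and bags: "\<forall>X\<in>set B. card X \<le> 3"
    and fin: "finite V" and irr: "\<forall>v. \<not> E v v" and W'V: "W' \<subseteq> V" and ne: "W' \<noteq> {}"
  shows "\<exists>v\<in>W'. card (nb W' E v) \<le> 2"
proof -
  have P: "(\<forall>i<length B. B ! i \<subseteq> V)
   \<and> (\<forall>v\<in>V. \<exists>i<length B. v \<in> B ! i)
   \<and> (\<forall>u v. E u v \<longrightarrow> (\<exists>i<length B. u \<in> B ! i \<and> v \<in> B ! i))
   \<and> (\<forall>v i j k. i \<le> j \<and> j \<le> k \<and> k < length B \<and> v \<in> B ! i \<and> v \<in> B ! k \<longrightarrow> v \<in> B ! j)"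
    using pd unfolding path_decomposition_def .
  have sub: "\<And>i. i < length B \<Longrightarrow> B ! i \<subseteq> V" using P[THEN conjunct1] by blast
  have cov: "\<And>v. v \<in> V \<Longrightarrow> \<exists>i<length B. v \<in> B ! i" using P[THEN conjunct2, THEN conjunct1] by blast
  have edge: "\<And>u v. E u v \<Longrightarrow> \<exists>i<length B. u \<in> B ! i \<and> v \<in> B ! i"
    using P[THEN conjunct2, THEN conjunct2, THEN conjunct1] by blast
  have inter: "\<And>v i j k. i \<le> j \<Longrightarrow> j \<le> k \<Longrightarrow> k < length B \<Longrightarrow> v \<in> B ! i \<Longrightarrow> v \<in> B ! k \<Longrightarrow> v \<in> B ! j"
    using P[THEN conjunct2, THEN conjunct2, THEN conjunct2] by blast
  have last: "\<exists>l. i \<le> l \<and> l < length B \<and> x \<in> B ! l \<and> (\<forall>j. l < j \<and> j < length B \<longrightarrow> x \<notin> B ! j)"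
    if "i < length B" "x \<in> B ! i" for x i
  proof -
    define S where "S = {j. j < length B \<and> x \<in> B ! j}"
    have finS: "finite S" by (rule finite_subset[of _ "{..<length B}"]) (auto simp: S_def)
    have iS: "i \<in> S" using that unfolding S_def by simp
    have MS: "Max S \<in> S" using finS iS Max_in by blast
    hence "Max S < length B" "x \<in> B ! Max S" unfolding S_def by simp_all
    moreover have "i \<le> Max S" using finS iS by simp
    moreover have "\<forall>j. Max S < j \<and> j < length B \<longrightarrow> x \<notin> B ! j"
    proof (intro allI impI)
      fix j assume j: "Max S < j \<and> j < length B"
      show "x \<notin> B ! j"
      proof
        assume "x \<in> B ! j" hence "j \<in> S" using j unfolding S_def by simp
        hence "j \<le> Max S" using finS by simp
        thus False using j by simp
      qed
    qed
    ultimately show ?thesis by blast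
  qed
  obtain x0 where x0: "x0 \<in> W'" using ne by auto
  then obtain i0 where i0: "i0 < length B" "x0 \<in> B ! i0" using cov W'V by blast
  obtain l0 where l0: "l0 < length B" "x0 \<in> B ! l0" "\<forall>j. l0 < j \<and> j < length B \<longrightarrow> x0 \<notin> B ! j"
    using last[OF i0] by blast
  define Q where "Q i = (i < length B \<and> (\<exists>v\<in>W'. v \<in> B ! i \<and> (\<forall>j. i < j \<and> j < length B \<longrightarrow> v \<notin> B ! j)))" for i
  have "Q l0" unfolding Q_def using l0 x0 by blast
  define m where "m = (LEAST i. Q i)"
  have Qm: "Q m" unfolding m_def by (rule LeastI) fact
  have minm: "\<And>i. i < m \<Longrightarrow> \<not> Q i" unfolding m_def by (rule not_less_Least)
  obtain v where mB: "m < length B" and v: "v \<in> W'" "v \<in> B ! m"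
      and vl: "\<forall>j. m < j \<and> j < length B \<longrightarrow> v \<notin> B ! j"
    using Qm unfolding Q_def by blast
  have nbsub: "nb W' E v \<subseteq> B ! m - {v}"
  proof
    fix u assume "u \<in> nb W' E v"
    hence uW: "u \<in> W'" and Evu: "E v u" unfolding nb_def by auto
    have uv: "u \<noteq> v" using Evu irr by auto
    obtain k where k: "k < length B" "v \<in> B ! k" "u \<in> B ! k" using edge[OF Evu] by blast
    have km: "k \<le> m"
    proof (rule ccontr)
      assume "\<not> k \<le> m" hence "m < k" by simp
      thus False using vl k by blast
    qed
    have "u \<in> B ! m"
    proof (rule ccontr)
      assume un: "u \<notin> B ! m"
      obtain l where l: "k \<le> l" "l < length B" "u \<in> B ! l" "\<forall>j. l < j \<and> j < length B \<longrightarrow> u \<notin> B ! j"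
        using last[OF k(1) k(3)] by blast
      show False
      proof (cases "m \<le> l")
        case True
        thus False using inter[OF km True l(2) k(3) l(3)] un by simp
      next
        case False
        hence "Q l" unfolding Q_def using l uW by blast
        thus False using minm False by simp
      qed
    qed
    thus "u \<in> B ! m - {v}" using uv by simp
  qed
  have finB: "finite (B ! m)" using sub[OF mB] fin finite_subset by blast
  have "card (nb W' E v) \<le> card (B ! m - {v})" using nbsub finB by (intro card_mono) auto
  also have "\<dots> = card (B ! m) - 1" using v(2) finB by simp
  also have "\<dots> \<le> 2"
  proof -
    have "B ! m \<in> set B" using mB by simp
    hence "card (B ! m) \<le> 3" using bags by blast
    thus ?thesis by simp
  qed
  finally show ?thesis using v(1) by blast
qed

lemma cc_pow: "cc ^ n = 4 powr (real n / 3)"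
proof -
  have "cc ^ n = cc powr real n" using ccpos by (simp add: powr_realpow)
  also have "\<dots> = 4 powr (real n / 3)" unfolding cc_def by (simp add: powr_powr)
  finally show ?thesis .
qed

lemma IM_K3: "card (induced_matchings {0,1,2::nat} (\<lambda>u v. u \<in> {0,1,2::nat} \<and> v \<in> {0,1,2} \<and> u \<noteq> v)) = 4"
proof -
  let ?V = "{0,1,2::nat}"
  let ?S = "{B. B \<subseteq> ?V \<and> card B = 2}"
  have eq: "induced_matchings ?V (\<lambda>u v. u \<in> ?V \<and> v \<in> ?V \<and> u \<noteq> v) = insert {} ?S"
  proof (rule set_eqI)
    fix D :: "nat set"
    show "D \<in> induced_matchings ?V (\<lambda>u v. u \<in> ?V \<and> v \<in> ?V \<and> u \<noteq> v) \<longleftrightarrow> D \<in> insert {} ?S"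
    proof (cases "D \<subseteq> ?V")
      case False thus ?thesis unfolding induced_matchings_def by auto
    next
      case True
      have finD: "finite D" using True finite_subset by blast
      have c: "\<And>v. v \<in> D \<Longrightarrow> {u\<in>D. v \<in> ?V \<and> u \<in> ?V \<and> v \<noteq> u} = D - {v}" using True by auto
      have "D \<in> induced_matchings ?V (\<lambda>u v. u \<in> ?V \<and> v \<in> ?V \<and> u \<noteq> v) \<longleftrightarrow> (\<forall>v\<in>D. card D - 1 = 1)"
        unfolding induced_matchings_def using True c finD by (simp add: card_Diff_singleton)
      also have "\<dots> \<longleftrightarrow> D = {} \<or> card D = 2"
      proof
        assume h: "\<forall>v\<in>D. card D - 1 = 1"
        show "D = {} \<or> card D = 2"
        proof (cases "D = {}")
          case False
          then obtain v where "v \<in> D" by auto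
          thus ?thesis using h by fastforce
        qed simp
      qed auto
      finally show ?thesis using True by auto
    qed
  qed
  have "card ?S = card ?V choose 2" by (rule n_subsets) simp
  moreover have "card ?V = 3" by simp
  moreover have "(3::nat) choose 2 = 3" by (simp add: choose_two)
  ultimately have cS: "card ?S = 3" by metis
  have finS: "finite ?S" by (rule finite_subset[of _ "Pow ?V"]) auto
  have "{} \<notin> ?S" by auto
  hence "card (insert {} ?S) = Suc (card ?S)" using finS by simp
  thus ?thesis unfolding eq using cS by simp
qed

theorem mainTheorem14:
  shows "(\<forall>(V :: 'a set) E. simple_graph V E \<and> pathwidth_le V E 2 \<longrightarrow>
            real (card (induced_matchings V E)) \<le> 4 powr (real (card V) / 3))
       \<and> (let V3 = {0, 1, 2 :: nat}; E3 = (\<lambda>u v. u \<in> V3 \<and> v \<in> V3 \<and> u \<noteq> v) in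
            simple_graph V3 E3 \<and> pathwidth_le V3 E3 2 \<and>
            real (card (induced_matchings V3 E3)) = 4 powr (real (card V3) / 3))"
proof (intro conjI allI impI)
  fix V :: "'a set" and E
  assume a: "simple_graph V E \<and> pathwidth_le V E 2"
  have fin: "finite V" and sym: "\<forall>u v. E u v \<longrightarrow> E v u" and irr: "\<forall>v. \<not> E v v"
    using a unfolding simple_graph_def by auto
  obtain B where B: "path_decomposition V E B" "\<forall>X\<in>set B. card X \<le> 3"
    using a unfolding pathwidth_le_def by auto
  have "real (card (induced_matchings V E)) \<le> cc ^ card V"
    by (rule main_bound[OF sym irr fin]) (use pw_degen[OF B fin irr] in auto)
  thus "real (card (induced_matchings V E)) \<le> 4 powr (real (card V) / 3)" by (simp add: cc_pow)
next
  show "let V3 = {0, 1, 2 :: nat}; E3 = (\<lambda>u v. u \<in> V3 \<and> v \<in> V3 \<and> u \<noteq> v) in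
            simple_graph V3 E3 \<and> pathwidth_le V3 E3 2 \<and>
            real (card (induced_matchings V3 E3)) = 4 powr (real (card V3) / 3)"
    unfolding Let_def
  proof (intro conjI)
    show "simple_graph {0,1,2::nat} (\<lambda>u v. u \<in> {0,1,2::nat} \<and> v \<in> {0,1,2} \<and> u \<noteq> v)"
      unfolding simple_graph_def by auto
    show "pathwidth_le {0,1,2::nat} (\<lambda>u v. u \<in> {0,1,2::nat} \<and> v \<in> {0,1,2} \<and> u \<noteq> v) 2"
      unfolding pathwidth_le_def path_decomposition_def
      by (rule exI[of _ "[{0,1,2}]"]) auto
    show "real (card (induced_matchings {0,1,2::nat} (\<lambda>u v. u \<in> {0,1,2::nat} \<and> v \<in> {0,1,2} \<and> u \<noteq> v)))
        = 4 powr (real (card {0,1,2::nat}) / 3)"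
      using IM_K3 by simp
  qed
qed

end
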